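(* Let $x\in W_n$ and $1\le i\le n-2$. Then $x\in\mathcal{D}_i(W_n)$ if and only if $tx\in\mathcal{D}_i(W_n)$; and if this is the case, then $\gamma_i(tx)=t\gamma_i(x)$.
   Context: $W_n$ is the Weyl group of type $B_n$ with Coxeter generators $t,s_1,\dots,s_{n-1}$ ($(ts_1)^4=1$, $(s_is_{i+1})^3=1$, other distinct pairs commute), $\ell$ its length function. For $1\le i\le n-2$ and $x\in W_n$, let $\mathcal{R}_i(x)=\{s\in\{s_i,s_{i+1}\}:\ell(xs)<\ell(x)\}$ and let $\mathcal{D}_i(W_n)$ be the set of $x\in W_n$ with $|\mathcal{R}_i(x)|=1$. For $x\in\mathcal{D}_i(W_n)$ the set $\{xs_i,xs_{i+1}\}\cap\mathcal{D}_i(W_n)$ is a singleton, whose element is denoted $\gamma_i(x)$ (the Kazhdan–Lusztig star operation). *)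

theory Defs
  imports Main
begin

text \<open>Weyl group of type B_n realised as the group of signed permutations of
  {-n..n}-{0}, as maps int => int. Elements are products of the Coxeter generators
  t (sign change of 1) and s_i (swap i,i+1 and -i,-(i+1)); the product xy is
  composition x o y (so xs = x o s, tx = t o x).\<close>

definition tB :: "int \<Rightarrow> int" where
  "tB k = (if k = 1 then -1 else if k = -1 then 1 else k)"

definition sB :: "nat \<Rightarrow> int \<Rightarrow> int" where
  "sB i k = (if k = int i then int i + 1 else if k = int i + 1 then int i
             else if k = - int i then - int i - 1 else if k = - int i - 1 then - int i
             else k)"

definition gensB :: "nat \<Rightarrow> (int \<Rightarrow> int) set" where
  "gensB n = insert tB {sB i | i. 1 \<le> i \<and> i \<le> n - 1}"

definition prodw :: "(int \<Rightarrow> int) list \<Rightarrow> int \<Rightarrow> int" where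
  "prodw ws = foldr (\<circ>) ws id"

definition WB :: "nat \<Rightarrow> (int \<Rightarrow> int) set" where
  "WB n = {prodw ws | ws. set ws \<subseteq> gensB n}"

definition lenB :: "nat \<Rightarrow> (int \<Rightarrow> int) \<Rightarrow> nat" where
  "lenB n x = (LEAST k. \<exists>ws. length ws = k \<and> set ws \<subseteq> gensB n \<and> prodw ws = x)"

definition RB :: "nat \<Rightarrow> nat \<Rightarrow> (int \<Rightarrow> int) \<Rightarrow> (int \<Rightarrow> int) set" where
  "RB n i x = {s \<in> {sB i, sB (i + 1)}. lenB n (x \<circ> s) < lenB n x}"

definition DB :: "nat \<Rightarrow> nat \<Rightarrow> (int \<Rightarrow> int) set" where
  "DB n i = {x \<in> WB n. card (RB n i x) = 1}"

definition gammaB :: "nat \<Rightarrow> nat \<Rightarrow> (int \<Rightarrow> int) \<Rightarrow> (int \<Rightarrow> int)" where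
  "gammaB n i x = (THE y. y \<in> {x \<circ> sB i, x \<circ> sB (i + 1)} \<inter> DB n i)"

end

theory Submission imports Defs begin

definition sw :: "int \<Rightarrow> int \<Rightarrow> int \<Rightarrow> int" where
  "sw p q k = (if k = p then q else if k = q then p else k)"

lemma sw_sw[simp]: "sw p q (sw p q k) = k" by (simp add: sw_def)
lemma comp_sw_sw[simp]: "x \<circ> sw p q \<circ> sw p q = x" by (rule ext) simp

definition invs :: "int set \<Rightarrow> (int \<Rightarrow> int) \<Rightarrow> (int \<times> int) set" where
  "invs D x = {(a,b). a \<in> D \<and> b \<in> D \<and> a < b \<and> x b < x a}"

lemma swap_img:
  assumes "p \<in> D" "q \<in> D" "p < q" "\<forall>c\<in>D. \<not>(p<c \<and> c<q)"
  shows "(\<lambda>(a,b). (sw p q a, sw p q b)) ` (invs D x - {(p,q)}) \<subseteq> invs D (x \<circ> sw p q) - {(p,q)}"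
proof
  fix z assume "z \<in> (\<lambda>(a,b). (sw p q a, sw p q b)) ` (invs D x - {(p,q)})"
  then obtain a b where z: "z = (sw p q a, sw p q b)" and ab: "a \<in> D" "b \<in> D" "a < b" "x b < x a" "(a,b) \<noteq> (p,q)"
    by (auto simp: invs_def)
  have "sw p q a < sw p q b" using ab assms by (auto simp: sw_def)
  moreover have "sw p q a \<in> D" "sw p q b \<in> D" using ab assms by (auto simp: sw_def)
  moreover have "(sw p q a, sw p q b) \<noteq> (p,q)" using ab assms by (auto simp: sw_def)
  ultimately show "z \<in> invs D (x \<circ> sw p q) - {(p,q)}" using z ab by (auto simp: invs_def)
qed

lemma swap_card:
  assumes fin: "finite D" and D: "p \<in> D" "q \<in> D" "p < q" "\<forall>c\<in>D. \<not>(p<c \<and> c<q)" and ne: "x p \<noteq> x q"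
  shows "int (card (invs D (x \<circ> sw p q))) = int (card (invs D x)) + (if x p < x q then 1 else -1)"
proof -
  let ?f = "\<lambda>(a,b). (sw p q a, sw p q b)"
  have inj: "inj_on ?f A" for A apply (rule inj_onI) apply clarsimp by (metis sw_sw)
  have finI: "finite (invs D y)" for y
    by (rule finite_subset[of _ "D \<times> D"]) (auto simp: invs_def fin)
  have c1: "card (invs D x - {(p,q)}) \<le> card (invs D (x \<circ> sw p q) - {(p,q)})"
    using card_mono[OF _ swap_img[OF D, of x]] card_image[OF inj] finI by auto
  have c2: "card (invs D (x \<circ> sw p q) - {(p,q)}) \<le> card (invs D (x \<circ> sw p q \<circ> sw p q) - {(p,q)})"
    using card_mono[OF _ swap_img[OF D, of "x \<circ> sw p q"]] card_image[OF inj] finI by auto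
  have eq: "card (invs D (x \<circ> sw p q) - {(p,q)}) = card (invs D x - {(p,q)})"
    using c1 c2 by simp
  have m1: "(p,q) \<in> invs D x \<longleftrightarrow> x q < x p" using D by (auto simp: invs_def)
  have m2: "(p,q) \<in> invs D (x \<circ> sw p q) \<longleftrightarrow> x p < x q" using D by (auto simp: invs_def sw_def)
  show ?thesis
  proof (cases "x p < x q")
    case True
    then have i1: "(p,q) \<in> invs D (x \<circ> sw p q)" and i2: "(p,q) \<notin> invs D x" using m1 m2 by auto
    have "card (invs D (x \<circ> sw p q)) = Suc (card (invs D (x \<circ> sw p q) - {(p,q)}))"
      by (rule card.remove[OF finI i1])
    moreover have "card (invs D x) = card (invs D x - {(p,q)})" using i2 by simp
    ultimately show ?thesis using eq True by simp
  next
    case False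
    then have "x q < x p" using ne by simp
    then have i1: "(p,q) \<in> invs D x" and i2: "(p,q) \<notin> invs D (x \<circ> sw p q)" using m1 m2 False by auto
    have "card (invs D x) = Suc (card (invs D x - {(p,q)}))"
      by (rule card.remove[OF finI i1])
    moreover have "card (invs D (x \<circ> sw p q)) = card (invs D (x \<circ> sw p q) - {(p,q)})" using i2 by simp
    ultimately show ?thesis using eq False by simp
  qed
qed

definition Dn :: "nat \<Rightarrow> int set" where "Dn n = {-int n..int n} - {0}"
definition negs :: "nat \<Rightarrow> (int \<Rightarrow> int) \<Rightarrow> int set" where
  "negs n x = {a. 1 \<le> a \<and> a \<le> int n \<and> x a < 0}"
definition Lb :: "nat \<Rightarrow> (int \<Rightarrow> int) \<Rightarrow> nat" where
  "Lb n x = card (invs (Dn n) x) + card (negs n x)"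
definition Pn :: "nat \<Rightarrow> (int \<Rightarrow> int) \<Rightarrow> bool" where
  "Pn n x = (inj x \<and> (\<forall>k. x (-k) = - x k) \<and> (\<forall>k. (k = 0 \<or> int n < \<bar>k\<bar>) \<longrightarrow> x k = k)
     \<and> (\<forall>k. 1 \<le> \<bar>k\<bar> \<and> \<bar>k\<bar> \<le> int n \<longrightarrow> 1 \<le> \<bar>x k\<bar> \<and> \<bar>x k\<bar> \<le> int n))"

lemma finite_Dn[simp]: "finite (Dn n)" by (simp add: Dn_def)

lemma sB_eq: assumes "1 \<le> j" shows "sB j = sw (int j) (int j+1) \<circ> sw (-int j-1) (-int j)"
  apply (rule ext) using assms unfolding sB_def sw_def comp_def by (auto split: if_split)
lemma tB_eq: "tB = sw (-1) 1"
  by (rule ext) (auto simp: tB_def sw_def)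

lemma sB_inv: "1 \<le> j \<Longrightarrow> sB j (sB j k) = k" by (auto simp: sB_def)
lemma tB_inv[simp]: "tB (tB k) = k" by (auto simp: tB_def)

lemma negs_invol:
  assumes inv: "\<And>k. s (s k) = k" and rng: "\<And>k. 1 \<le> k \<Longrightarrow> k \<le> int n \<Longrightarrow> 1 \<le> s k \<and> s k \<le> int n"
  shows "card (negs n (x \<circ> s)) = card (negs n x)"
proof -
  have inj: "inj_on s A" for A by (metis inj_onI inv)
  have fin: "finite (negs n y)" for y by (rule finite_subset[of _ "{1..int n}"]) (auto simp: negs_def)
  have sub: "s ` negs n y \<subseteq> negs n (y \<circ> s)" for y using rng inv by (auto simp: negs_def)
  have e: "y \<circ> s \<circ> s = y" for y by (rule ext) (simp add: inv)
  have "card (negs n x) \<le> card (negs n (x \<circ> s))"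
    using card_mono[OF fin sub[of x]] card_image[OF inj] by simp
  moreover have "card (negs n (x \<circ> s)) \<le> card (negs n x)"
    using card_mono[OF fin sub[of "x \<circ> s"]] card_image[OF inj] e[of x] by simp
  ultimately show ?thesis by simp
qed

lemma L_s:
  assumes P: "Pn n x" and j: "1 \<le> j" "j + 1 \<le> n"
  shows "int (Lb n (x \<circ> sB j)) = int (Lb n x) + (if x (int j) < x (int j+1) then 2 else -2)"
proof -
  have inj: "inj x" and odd: "\<And>k. x (-k) = - x k" using P by (auto simp: Pn_def)
  let ?y = "x \<circ> sw (int j) (int j+1)"
  have e: "x \<circ> sB j = ?y \<circ> sw (-int j-1) (-int j)" using sB_eq[OF j(1)] by (simp add: comp_assoc)
  have ne1: "x (int j) \<noteq> x (int j + 1)" using inj by (metis inj_eq add_cancel_left_right one_neq_zero)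
  have c1: "int (card (invs (Dn n) ?y)) = int (card (invs (Dn n) x)) + (if x (int j) < x (int j+1) then 1 else -1)"
    using swap_card[of "Dn n" "int j" "int j + 1" x] j ne1 by (auto simp: Dn_def)
  have y1: "?y (-int j-1) = - x (int j+1)" "?y (-int j) = - x (int j)" using j odd
    by (auto simp: sw_def) (metis minus_diff_eq diff_minus_eq_add add.commute uminus_add_conv_diff)
  have c2: "int (card (invs (Dn n) (?y \<circ> sw (-int j-1) (-int j)))) = int (card (invs (Dn n) ?y)) + (if ?y (-int j-1) < ?y (-int j) then 1 else -1)"
    apply (rule swap_card) using j y1 ne1 by (auto simp: Dn_def)
  have c3: "card (negs n (x \<circ> sB j)) = card (negs n x)"
    by (rule negs_invol) (use j in \<open>auto simp: sB_def sB_inv\<close>)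
  show ?thesis using c1 c2 c3 e y1 by (auto simp: Lb_def)
qed

lemma L_t:
  assumes P: "Pn n x" and n: "1 \<le> n"
  shows "int (Lb n (x \<circ> tB)) = int (Lb n x) + (if 0 < x 1 then 2 else -2)"
proof -
  have inj: "inj x" and odd: "\<And>k. x (-k) = - x k" and x0: "x 0 = 0" using P by (auto simp: Pn_def)
  have x1: "x 1 \<noteq> 0" using inj x0 by (metis inj_eq one_neq_zero)
  have m1: "x (-1) = - x 1" using odd by simp
  have c1: "int (card (invs (Dn n) (x \<circ> tB))) = int (card (invs (Dn n) x)) + (if x (-1) < x 1 then 1 else -1)"
    unfolding tB_eq using n m1 x1 by (intro swap_card) (auto simp: Dn_def)
  have fin: "finite (negs n y)" for y by (rule finite_subset[of _ "{1..int n}"]) (auto simp: negs_def)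
  have d: "negs n (x \<circ> tB) - {1} = negs n x - {1}" by (auto simp: negs_def tB_def)
  have c2: "int (card (negs n (x \<circ> tB))) = int (card (negs n x)) + (if 0 < x 1 then 1 else -1)"
  proof (cases "0 < x 1")
    case True
    then have i1: "1 \<in> negs n (x \<circ> tB)" and i2: "1 \<notin> negs n x" using n m1 by (auto simp: negs_def tB_def)
    have "card (negs n (x \<circ> tB)) = Suc (card (negs n (x \<circ> tB) - {1}))" by (rule card.remove[OF fin i1])
    moreover have "card (negs n x) = card (negs n x - {1})" using i2 by simp
    ultimately show ?thesis using d True by simp
  next
    case False
    then have i1: "1 \<in> negs n x" and i2: "1 \<notin> negs n (x \<circ> tB)" using n m1 x1 by (auto simp: negs_def tB_def)
    have "card (negs n x) = Suc (card (negs n x - {1}))" by (rule card.remove[OF fin i1])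
    moreover have "card (negs n (x \<circ> tB)) = card (negs n (x \<circ> tB) - {1})" using i2 by simp
    ultimately show ?thesis using d False by simp
  qed
  show ?thesis using c1 c2 m1 x1 by (auto simp: Lb_def)
qed


lemma Pn_id: "Pn n id" by (simp add: Pn_def)

lemma Pn_comp: assumes "Pn n x" "Pn n g" shows "Pn n (x \<circ> g)"
proof -
  have a: "inj x" "\<And>k. x (-k) = - x k" "\<And>k. (k = 0 \<or> int n < \<bar>k\<bar>) \<Longrightarrow> x k = k"
     "\<And>k. 1 \<le> \<bar>k\<bar> \<Longrightarrow> \<bar>k\<bar> \<le> int n \<Longrightarrow> 1 \<le> \<bar>x k\<bar> \<and> \<bar>x k\<bar> \<le> int n"
    using assms(1) unfolding Pn_def by blast+
  have b: "inj g" "\<And>k. g (-k) = - g k" "\<And>k. (k = 0 \<or> int n < \<bar>k\<bar>) \<Longrightarrow> g k = k"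
     "\<And>k. 1 \<le> \<bar>k\<bar> \<Longrightarrow> \<bar>k\<bar> \<le> int n \<Longrightarrow> 1 \<le> \<bar>g k\<bar> \<and> \<bar>g k\<bar> \<le> int n"
    using assms(2) unfolding Pn_def by blast+
  show ?thesis unfolding Pn_def
    using a b by (auto intro: inj_compose)
qed

lemma Pn_t: "1 \<le> n \<Longrightarrow> Pn n tB"
  unfolding Pn_def by (auto simp: tB_def intro!: injI) (auto split: if_splits)

lemma Pn_s: "1 \<le> j \<Longrightarrow> j + 1 \<le> n \<Longrightarrow> Pn n (sB j)"
  unfolding Pn_def by (auto simp: sB_def intro!: injI) (auto split: if_splits)

lemma gens_cases: "g \<in> gensB n \<Longrightarrow> g = tB \<or> (\<exists>j. 1 \<le> j \<and> j + 1 \<le> n \<and> g = sB j)"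
  unfolding gensB_def by auto

lemma Pn_gen: "g \<in> gensB n \<Longrightarrow> 1 \<le> n \<Longrightarrow> Pn n g"
  using gens_cases Pn_t Pn_s by blast

lemma gen_invol: "g \<in> gensB n \<Longrightarrow> g \<circ> g = id"
  using gens_cases[of g n] by (auto intro!: ext simp: sB_inv)

lemma L_gen: assumes "Pn n x" "g \<in> gensB n" "1 \<le> n" shows "Lb n (x \<circ> g) \<le> Lb n x + 2"
proof -
  have "int (Lb n (x \<circ> g)) \<le> int (Lb n x) + 2"
    using gens_cases[OF assms(2)]
  proof
    assume "g = tB" then show ?thesis using L_t[OF assms(1,3)] by auto
  next
    assume "\<exists>j. 1 \<le> j \<and> j + 1 \<le> n \<and> g = sB j"
    then obtain j where "1 \<le> j" "j + 1 \<le> n" "g = sB j" by blast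
    then show ?thesis using L_s[OF assms(1), of j] by auto
  qed
  then show ?thesis by linarith
qed

lemma prodw_snoc: "prodw (ws @ [g]) = prodw ws \<circ> g"
proof -
  have "foldr (\<circ>) ws z = foldr (\<circ>) ws id \<circ> z" for z :: "int \<Rightarrow> int"
    by (induction ws) (auto simp: comp_assoc)
  note h = this
  have "prodw (ws @ [g]) = foldr (\<circ>) ws g" by (simp add: prodw_def)
  also have "\<dots> = prodw ws \<circ> g" unfolding prodw_def by (rule h)
  finally show ?thesis .
qed

lemma word_props: "set ws \<subseteq> gensB n \<Longrightarrow> 1 \<le> n \<Longrightarrow> Pn n (prodw ws) \<and> Lb n (prodw ws) \<le> 2 * length ws"
proof (induction ws rule: rev_induct)
  case Nil
  have "invs (Dn n) id = {}" "negs n id = {}" by (auto simp: invs_def negs_def)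
    then have "Lb n id = 0" by (simp add: Lb_def)
  then show ?case using Pn_id by (simp add: prodw_def id_def)
next
  case (snoc g ws)
  then have "Pn n (prodw ws)" "Lb n (prodw ws) \<le> 2 * length ws" "g \<in> gensB n" by auto
  moreover have "Pn n (prodw ws \<circ> g)" using Pn_comp Pn_gen snoc.prems calculation by blast
  moreover have "Lb n (prodw ws \<circ> g) \<le> Lb n (prodw ws) + 2" using L_gen calculation snoc.prems by blast
  ultimately show ?case unfolding prodw_snoc length_append_singleton 
    apply (intro conjI) apply assumption apply (subst mult_Suc_right) apply linarith done
qed

lemma noDesc_id:
  assumes P: "Pn n x" and x1: "0 < x 1" and inc: "\<And>j. 1 \<le> j \<Longrightarrow> j + 1 \<le> n \<Longrightarrow> x (int j) < x (int j + 1)"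
  shows "x = id"
proof -
  have odd: "\<And>k. x (-k) = - x k" and out: "\<And>k. (k = 0 \<or> int n < \<bar>k\<bar>) \<Longrightarrow> x k = k"
     and rng: "\<And>k. 1 \<le> \<bar>k\<bar> \<Longrightarrow> \<bar>k\<bar> \<le> int n \<Longrightarrow> 1 \<le> \<bar>x k\<bar> \<and> \<bar>x k\<bar> \<le> int n"
    using P unfolding Pn_def by blast+
  have up: "1 \<le> k \<longrightarrow> k \<le> n \<longrightarrow> int k \<le> x (int k)" for k :: nat
  proof (induction k)
    case 0 then show ?case by simp
  next
    case (Suc m)
    show ?case
    proof (cases "m = 0")
      case True then show ?thesis using x1 by simp
    next
      case False
      show ?thesis
      proof (intro impI)
        assume "Suc m \<le> n"
        then have "x (int m) < x (int m + 1)" "int m \<le> x (int m)" using Suc inc[of m] False by auto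
        then show "int (Suc m) \<le> x (int (Suc m))" by (simp add: add.commute)
      qed
    qed
  qed
  have down: "k < n \<longrightarrow> x (int n - int k) \<le> int n - int k" for k :: nat
  proof (induction k)
    case 0 then show ?case using rng[of "int n"] by auto
  next
    case (Suc m)
    show ?case
    proof
      assume "Suc m < n"
      then have "x (int (n - Suc m)) < x (int (n - Suc m) + 1)" by (intro inc) auto
      moreover have "int (n - Suc m) = int n - int (Suc m)" "int (n - Suc m) + 1 = int n - int m"
        using \<open>Suc m < n\<close> by auto
      ultimately show "x (int n - int (Suc m)) \<le> int n - int (Suc m)" using Suc \<open>Suc m < n\<close> by auto
    qed
  qed
  have pos: "x a = a" if "1 \<le> a" "a \<le> int n" for a
  proof -
    define k where "k = nat a"
    have k: "a = int k" using that by (simp add: k_def)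
    have "int k \<le> x (int k)" using up[of k] k that by auto
    moreover have "x (int n - int (n - k)) \<le> int n - int (n - k)" using down[of "n - k"] k that by auto
    moreover have "int n - int (n - k) = int k" using k that by auto
    ultimately show ?thesis using k by auto
  qed
  show ?thesis
  proof
    fix k
    show "x k = id k"
    proof (cases "k = 0 \<or> int n < \<bar>k\<bar>")
      case True then show ?thesis using out by simp
    next
      case False
      then show ?thesis
      proof (cases "0 < k")
        case True then show ?thesis using pos False by auto
      next
        case f2: False
        then have "x (-k) = -k" using pos False by auto
        then show ?thesis using odd[of "-k"] by simp
      qed
    qed
  qed
qed

lemma exists_word:
  "Pn n x \<Longrightarrow> 1 \<le> n \<Longrightarrow> \<exists>ws. set ws \<subseteq> gensB n \<and> prodw ws = x \<and> 2 * length ws = Lb n x"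
proof (induction "Lb n x" arbitrary: x rule: less_induct)
  case less
  show ?case
  proof (cases "x = id")
    case True
    have "invs (Dn n) id = {}" "negs n id = {}" by (auto simp: invs_def negs_def)
    then have "Lb n id = 0" by (simp add: Lb_def)
    then show ?thesis using True by (intro exI[of _ "[]"]) (simp add: prodw_def)
  next
    case False
    have "\<exists>g \<in> gensB n. int (Lb n (x \<circ> g)) = int (Lb n x) - 2"
    proof (rule ccontr)
      assume na: "\<not> ?thesis"
      have t: "tB \<in> gensB n" by (simp add: gensB_def)
      have s: "1 \<le> j \<Longrightarrow> j + 1 \<le> n \<Longrightarrow> sB j \<in> gensB n" for j by (auto simp: gensB_def)
      have "0 < x 1" using na t L_t[OF less.prems] by (auto split: if_splits)
      moreover have "x (int j) < x (int j + 1)" if "1 \<le> j" "j + 1 \<le> n" for j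
        using na s[OF that] L_s[OF less.prems(1) that] by (auto split: if_splits)
      ultimately have "x = id" using noDesc_id less.prems(1) by blast
      then show False using False by simp
    qed
    then obtain g where g: "g \<in> gensB n" "int (Lb n (x \<circ> g)) = int (Lb n x) - 2" by blast
    have "Pn n (x \<circ> g)" using Pn_comp Pn_gen g less.prems by blast
    then obtain ws where ws: "set ws \<subseteq> gensB n" "prodw ws = x \<circ> g" "2 * length ws = Lb n (x \<circ> g)"
      using less.hyps[of "x \<circ> g"] g less.prems by force
    have "prodw (ws @ [g]) = x" using ws gen_invol[OF g(1)] by (simp add: prodw_snoc comp_assoc)
    then show ?thesis using ws g by (intro exI[of _ "ws @ [g]"]) auto
  qed
qed

lemma lenB_eq: assumes "Pn n x" "1 \<le> n" shows "lenB n x = Lb n x div 2"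
proof -
  obtain ws where ws: "set ws \<subseteq> gensB n" "prodw ws = x" "2 * length ws = Lb n x"
    using exists_word[OF assms] by blast
  show ?thesis unfolding lenB_def
  proof (rule Least_equality)
    show "\<exists>ws. length ws = Lb n x div 2 \<and> set ws \<subseteq> gensB n \<and> prodw ws = x"
      using ws by (intro exI[of _ ws]) auto
  next
    fix k assume "\<exists>ws. length ws = k \<and> set ws \<subseteq> gensB n \<and> prodw ws = x"
    then obtain vs where "length vs = k" "set vs \<subseteq> gensB n" "prodw vs = x" by blast
    then show "Lb n x div 2 \<le> k" using word_props[of vs n] assms(2) by auto
  qed
qed

lemma WB_Pn: "x \<in> WB n \<Longrightarrow> 1 \<le> n \<Longrightarrow> Pn n x"
  unfolding WB_def using word_props by blast

lemma WB_snoc: assumes "x \<in> WB n" "g \<in> gensB n" shows "x \<circ> g \<in> WB n"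
proof -
  obtain ws where ws: "set ws \<subseteq> gensB n" "x = prodw ws" using assms(1) unfolding WB_def by blast
  have "x \<circ> g = prodw (ws @ [g])" using ws(2) by (simp only: prodw_snoc)
  moreover have "set (ws @ [g]) \<subseteq> gensB n" using ws(1) assms(2) by simp
  ultimately show ?thesis unfolding WB_def by blast
qed

lemma WB_t: "x \<in> WB n \<Longrightarrow> tB \<circ> x \<in> WB n"
  unfolding WB_def gensB_def by clarify (rule exI[of _ "tB # _"], auto simp: prodw_def)

lemma desc:
  assumes "x \<in> WB n" "1 \<le> j" "j + 1 \<le> n"
  shows "lenB n (x \<circ> sB j) < lenB n x \<longleftrightarrow> x (int j + 1) < x (int j)"
proof -
  have n: "1 \<le> n" using assms by simp
  have P: "Pn n x" using WB_Pn assms n by blast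
  have P2: "Pn n (x \<circ> sB j)" using Pn_comp[OF P Pn_s] assms by blast
  have ne: "x (int j) \<noteq> x (int j + 1)" using P unfolding Pn_def by (metis inj_eq add_cancel_left_right one_neq_zero)
  have L: "int (Lb n (x \<circ> sB j)) = int (Lb n x) + (if x (int j) < x (int j+1) then 2 else -2)"
    using L_s[OF P assms(2,3)] .
  note e = lenB_eq[OF P n] lenB_eq[OF P2 n]
  show ?thesis
  proof (cases "x (int j) < x (int j + 1)")
    case True
    then have "Lb n (x \<circ> sB j) = Lb n x + 2" using L by simp
    then show ?thesis unfolding e using True by auto
  next
    case False
    then have "Lb n x = Lb n (x \<circ> sB j) + 2" using L by simp
    then show ?thesis unfolding e using False ne by auto
  qed
qed


lemma DB_char:
  assumes "x \<in> WB n" "1 \<le> i" "i + 2 \<le> n"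
  shows "x \<in> DB n i \<longleftrightarrow> ((x (int i + 1) < x (int i)) \<noteq> (x (int i + 2) < x (int i + 1)))"
proof -
  have d1: "lenB n (x \<circ> sB i) < lenB n x \<longleftrightarrow> x (int i + 1) < x (int i)"
    using desc[of x n i] assms by simp
  have d2: "lenB n (x \<circ> sB (i+1)) < lenB n x \<longleftrightarrow> x (int i + 2) < x (int i + 1)"
    using desc[of x n "i+1"] assms by (simp add: ac_simps)
  have ne: "sB i \<noteq> sB (i+1)"
  proof
    assume "sB i = sB (i+1)"
    then have "sB i (int i) = sB (i+1) (int i)" by simp
    then show False using assms by (simp add: sB_def)
  qed
  have R: "RB n i x = (if x (int i + 1) < x (int i) then {sB i} else {}) \<union>
                      (if x (int i + 2) < x (int i + 1) then {sB (i+1)} else {})"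
    unfolding RB_def using d1 d2 by auto
  show ?thesis unfolding DB_def using assms(1) R ne by auto
qed

lemma tB_mono: "a \<noteq> b \<Longrightarrow> a \<noteq> -b \<Longrightarrow> a \<noteq> 0 \<Longrightarrow> b \<noteq> 0 \<Longrightarrow> (tB b < tB a \<longleftrightarrow> b < a)"
  by (auto simp: tB_def)

lemma Pn_ne: assumes "Pn n x" "k \<noteq> l" "k \<noteq> -l" shows "x k \<noteq> x l" "x k \<noteq> - x l"
proof -
  have inj: "inj x" and odd: "\<And>k. x (-k) = - x k" using assms(1) unfolding Pn_def by blast+
  show "x k \<noteq> x l" using inj assms(2) by (metis inj_eq)
  show "x k \<noteq> - x l" using inj assms(3) odd[of l] by (metis inj_eq)
qed

lemma inv_t:
  assumes "y \<in> WB n" "1 \<le> i" "i + 2 \<le> n"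
  shows "tB \<circ> y \<in> DB n i \<longleftrightarrow> y \<in> DB n i"
proof -
  have P: "Pn n y" using WB_Pn assms by auto
  have y0: "y 0 = 0" using P by (simp add: Pn_def)
  have nz: "y (int i) \<noteq> 0" "y (int i + 1) \<noteq> 0" "y (int i + 2) \<noteq> 0"
    using Pn_ne(1)[OF P, of "int i" 0] Pn_ne(1)[OF P, of "int i + 1" 0] Pn_ne(1)[OF P, of "int i + 2" 0] y0 assms(2) by auto
  have "tB (y (int i + 1)) < tB (y (int i)) \<longleftrightarrow> y (int i + 1) < y (int i)"
    using Pn_ne[OF P, of "int i" "int i + 1"] nz by (intro tB_mono) auto
  moreover have "tB (y (int i + 2)) < tB (y (int i + 1)) \<longleftrightarrow> y (int i + 2) < y (int i + 1)"
    using Pn_ne[OF P, of "int i + 1" "int i + 2"] nz by (intro tB_mono) auto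
  ultimately show ?thesis using DB_char[OF assms] DB_char[OF WB_t[OF assms(1)] assms(2,3)] by simp
qed

lemma uniq:
  assumes "x \<in> DB n i" "1 \<le> i" "i + 2 \<le> n"
  shows "x \<circ> sB i \<in> DB n i \<longleftrightarrow> \<not> (x \<circ> sB (i+1) \<in> DB n i)"
proof -
  have W: "x \<in> WB n" using assms(1) by (simp add: DB_def)
  have P: "Pn n x" using WB_Pn W assms by auto
  have g1: "sB i \<in> gensB n" "sB (i+1) \<in> gensB n" using assms by (auto simp: gensB_def)
  have W1: "x \<circ> sB i \<in> WB n" "x \<circ> sB (i+1) \<in> WB n" using WB_snoc[OF W] g1 by auto
  have v1: "sB i (int i) = int i + 1" "sB i (int i + 1) = int i" "sB i (int i + 2) = int i + 2"
    using assms by (auto simp: sB_def)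
  have v2: "sB (i+1) (int i) = int i" "sB (i+1) (int i + 1) = int i + 2" "sB (i+1) (int i + 2) = int i + 1"
    using assms by (auto simp: sB_def)
  have ne: "x (int i) \<noteq> x (int i + 1)" "x (int i + 1) \<noteq> x (int i + 2)" "x (int i) \<noteq> x (int i + 2)"
    using Pn_ne[OF P, of "int i" "int i + 1"] Pn_ne[OF P, of "int i + 1" "int i + 2"]
      Pn_ne[OF P, of "int i" "int i + 2"] by auto
  have c0: "(x (int i + 1) < x (int i)) \<noteq> (x (int i + 2) < x (int i + 1))"
    using DB_char[OF W assms(2,3)] assms(1) by simp
  have D1: "x \<circ> sB i \<in> DB n i \<longleftrightarrow> ((x (int i) < x (int i + 1)) \<noteq> (x (int i + 2) < x (int i)))"
    using DB_char[OF W1(1) assms(2,3)] by (simp only: comp_apply v1)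
  have D2: "x \<circ> sB (i+1) \<in> DB n i \<longleftrightarrow> ((x (int i + 2) < x (int i)) \<noteq> (x (int i + 1) < x (int i + 2)))"
    using DB_char[OF W1(2) assms(2,3)] by (simp only: comp_apply v2)
  have key: "\<And>a b c :: int. a \<noteq> b \<Longrightarrow> b \<noteq> c \<Longrightarrow> a \<noteq> c \<Longrightarrow> (b < a) \<noteq> (c < b) \<Longrightarrow>
     ((a < b) \<noteq> (c < a)) = (\<not> ((c < a) \<noteq> (b < c)))"
    by (smt (verit))
  show ?thesis unfolding D1 D2 by (rule key[OF ne c0])
qed

theorem corollary2p13:
  fixes n i :: nat and x :: "int \<Rightarrow> int"
  assumes "x \<in> WB n" and "1 \<le> i" and "i \<le> n - 2"
  shows "(x \<in> DB n i \<longleftrightarrow> tB \<circ> x \<in> DB n i) \<and>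
         (x \<in> DB n i \<longrightarrow> gammaB n i (tB \<circ> x) = tB \<circ> gammaB n i x)"
proof -
  have i2: "i + 2 \<le> n" using assms(2,3) by linarith
  have A: "x \<in> DB n i \<longleftrightarrow> tB \<circ> x \<in> DB n i" using inv_t[OF assms(1,2) i2] by simp
  have B: "gammaB n i (tB \<circ> x) = tB \<circ> gammaB n i x" if D: "x \<in> DB n i"
  proof -
    have W: "x \<in> WB n" using assms(1) .
    have g1: "sB i \<in> gensB n" "sB (i+1) \<in> gensB n" using assms i2 by (auto simp: gensB_def)
    have W1: "x \<circ> sB i \<in> WB n" "x \<circ> sB (i+1) \<in> WB n" using WB_snoc[OF W] g1 by auto
    have t1: "tB \<circ> (x \<circ> sB i) \<in> DB n i \<longleftrightarrow> x \<circ> sB i \<in> DB n i"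
      and t2: "tB \<circ> (x \<circ> sB (i+1)) \<in> DB n i \<longleftrightarrow> x \<circ> sB (i+1) \<in> DB n i"
      using inv_t[OF W1(1) assms(2) i2] inv_t[OF W1(2) assms(2) i2] by auto
    have u: "x \<circ> sB i \<in> DB n i \<longleftrightarrow> \<not> (x \<circ> sB (i+1) \<in> DB n i)" using uniq[OF D assms(2) i2] .
    show ?thesis
    proof (cases "x \<circ> sB i \<in> DB n i")
      case True
      have e1: "gammaB n i x = x \<circ> sB i" unfolding gammaB_def
        by (rule the_equality) (use True u in auto)
      have e2: "gammaB n i (tB \<circ> x) = tB \<circ> (x \<circ> sB i)" unfolding gammaB_def
        by (rule the_equality) (use True u t1 t2 in \<open>auto simp: comp_assoc\<close>)
      show ?thesis using e1 e2 by simp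
    next
      case False
      have e1: "gammaB n i x = x \<circ> sB (i+1)" unfolding gammaB_def
        by (rule the_equality) (use False u in auto)
      have e2: "gammaB n i (tB \<circ> x) = tB \<circ> (x \<circ> sB (i+1))" unfolding gammaB_def
        by (rule the_equality) (use False u t1 t2 in \<open>auto simp: comp_assoc\<close>)
      show ?thesis using e1 e2 by simp
    qed
  qed
  show ?thesis using A B by blast
qed

end
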